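(* Let $k\ge2$, let $p$ be a probability distribution on $\Delta_k$ and $q$ a probability distribution on $\{e_1,\dots,e_k\}$, and let $\gamma\in\Gamma(p,q)$ be an optimal coupling for the cost $c(x,y)=\|x-y\|_1$. For $i\ne j$ define $$B_{ij}:=\max\Big\{0,\ \min\{b\in\mathbb R:\ \gamma(\{x\in\Delta_k:x^\top v_{ij}\le b-1\}\times\{e_i\})=q(e_i)\}\Big\},$$ and $A_i:=\bigcap_{j\ne i}\{x\in\mathbb D^k:x^\top v_{ij}\ge B_{ij}-1\}$. Then $\bigcap_{i\in[k]}A_i\neq\emptyset$.
   Context: $\Delta_k=\{x\in\mathbb R^k:x\ge0,\sum_ix_i=1\}$ with vertices $e_1,\dots,e_k$ (standard basis of $\mathbb R^k$). $\mathbb D^k:=\{x\in\mathbb R^k:\sum_ix_i=1\}$ is the affine hyperplane containing $\Delta_k$. $v_{ij}:=e_j-e_i$, so $x^\top v_{ij}=x_j-x_i$. $\Gamma(p,q)$ is the set of couplings of $p$ and $q$; $\gamma$ is optimal if it minimizes $\int\|x-y\|_1\,d\gamma(x,y)$ over $\Gamma(p,q)$. (The minimum in the definition of $B_{ij}$ exists since the set of such $b$ is a nonempty closed half-line.) *)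

theory Defs
  imports "HOL-Probability.Probability"
begin

text \<open>Points of R^k are vectors real^'n with index type 'n, k = CARD('n).\<close>

definition std_simplex :: "(real^'n::finite) set" where
  "std_simplex = {x. (\<forall>i. 0 \<le> x $ i) \<and> (\<Sum>i\<in>UNIV. x $ i) = 1}"

definition hyperplane_D :: "(real^'n::finite) set" where
  "hyperplane_D = {x. (\<Sum>i\<in>UNIV. x $ i) = 1}"

definition vertex :: "'n::finite \<Rightarrow> real^'n" where
  "vertex i = axis i 1"

definition l1_cost :: "(real^'n::finite) \<Rightarrow> real^'n \<Rightarrow> real" where
  "l1_cost x y = (\<Sum>i\<in>UNIV. \<bar>x $ i - y $ i\<bar>)"

definition is_coupling ::
  "(real^'n::finite) measure \<Rightarrow> (real^'n) measure \<Rightarrow> ((real^'n) \<times> (real^'n)) measure \<Rightarrow> bool" where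
  "is_coupling p q \<gamma> \<longleftrightarrow> prob_space \<gamma> \<and> sets \<gamma> = sets (borel \<Otimes>\<^sub>M borel)
     \<and> distr \<gamma> borel fst = p \<and> distr \<gamma> borel snd = q"

definition optimal_coupling ::
  "(real^'n::finite) measure \<Rightarrow> (real^'n) measure \<Rightarrow> ((real^'n) \<times> (real^'n)) measure \<Rightarrow> bool" where
  "optimal_coupling p q \<gamma> \<longleftrightarrow> is_coupling p q \<gamma> \<and>
     (\<forall>\<gamma>'. is_coupling p q \<gamma>' \<longrightarrow>
        (\<integral>\<^sup>+ z. ennreal (l1_cost (fst z) (snd z)) \<partial>\<gamma>) \<le> (\<integral>\<^sup>+ z. ennreal (l1_cost (fst z) (snd z)) \<partial>\<gamma>'))"

text \<open>B_ij = max{0, min{b. gamma({x in std_simplex. x_j - x_i <= b - 1} x {e_i}) = q(e_i)}};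
  the minimum is taken as an infimum in the extended reals (it is -infinity only when the
  set is all of R, in which case B_ij = 0).\<close>
definition B_thr ::
  "((real^'n::finite) \<times> (real^'n)) measure \<Rightarrow> (real^'n) measure \<Rightarrow> 'n \<Rightarrow> 'n \<Rightarrow> real" where
  "B_thr \<gamma> q i j = real_of_ereal (max 0 (Inf (ereal ` {b::real.
      measure \<gamma> ({x \<in> std_simplex. x $ j - x $ i \<le> b - 1} \<times> {vertex i}) = measure q {vertex i}})))"

definition A_set ::
  "((real^'n::finite) \<times> (real^'n)) measure \<Rightarrow> (real^'n) measure \<Rightarrow> 'n \<Rightarrow> (real^'n) set" where
  "A_set \<gamma> q i = (\<Inter>j\<in>UNIV - {i}. {x \<in> hyperplane_D. x $ j - x $ i \<ge> B_thr \<gamma> q i j - 1})"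

end

theory Submission
  imports Defs
begin

fun wsum :: "('a \<Rightarrow> 'a \<Rightarrow> real) \<Rightarrow> 'a list \<Rightarrow> real" where
  "wsum c (a # b # xs) = c a b + wsum c (b # xs)"
| "wsum c _ = 0"

lemma wsum_append: "wsum c (xs @ [y] @ ys) = wsum c (xs @ [y]) + wsum c (y # ys)"
proof (induction xs)
  case Nil then show ?case by (cases ys) auto
next
  case (Cons a xs) then show ?case by (cases xs) auto
qed

lemma wsum_cons_le: 
  assumes "\<And>a b. c a b \<le> M" "0 \<le> M"
  shows "wsum c w \<le> real (length w) * M"
proof (induction w)
  case (Cons a xs) then show ?case using assms(1)[of a "hd xs"] assms(2) by (cases xs) (auto simp: algebra_simps)
qed (use assms in auto)

lemma wsum_cong: "(\<And>a b. a \<in> set w \<Longrightarrow> b \<in> set w \<Longrightarrow> c a b = d a b) \<Longrightarrow> wsum c w = wsum d w"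
proof (induction w)
  case (Cons a xs) then show ?case by (cases xs) auto
qed auto

definition cyc_ok :: "('a \<Rightarrow> 'a \<Rightarrow> real) \<Rightarrow> 'a set \<Rightarrow> bool" where
  "cyc_ok c V \<longleftrightarrow> (\<forall>vs. distinct vs \<and> set vs \<subseteq> V \<and> vs \<noteq> [] \<longrightarrow> wsum c (vs @ [hd vs]) \<le> 0)"

lemma closed_walk_le0:
  assumes "cyc_ok c V"
  shows "set w \<subseteq> V \<Longrightarrow> w \<noteq> [] \<Longrightarrow> wsum c (w @ [hd w]) \<le> 0"
proof (induction "length w" arbitrary: w rule: less_induct)
  case less
  show ?case
  proof (cases "distinct w")
    case True then show ?thesis using assms less.prems unfolding cyc_ok_def by blast
  next
    case False
    then obtain xs ys zs y where w: "w = xs@[y]@ys@[y]@zs" using not_distinct_decomp by blast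
    define w' where "w' = xs @ [y] @ zs"
    have hd: "hd w' = hd w" by (cases xs) (auto simp: w w'_def)
    have "wsum c (w @ [hd w]) = wsum c (xs @ [y]) + wsum c (y # ys @ [y] @ zs @ [hd w])"
      using wsum_append[of c xs y "ys @ [y] @ zs @ [hd w]"] by (simp add: w)
    also have "wsum c (y # ys @ [y] @ zs @ [hd w]) = wsum c ((y#ys) @ [hd (y#ys)]) + wsum c (y # zs @ [hd w])"
      using wsum_append[of c "y#ys" y "zs @ [hd w]"] by simp
    also have "wsum c ((y#ys) @ [hd (y#ys)]) \<le> 0"
      using less.hyps[of "y#ys"] less.prems by (auto simp: w)
    also have "wsum c (xs @ [y]) + (0 + wsum c (y # zs @ [hd w])) = wsum c (w' @ [hd w])"
      using wsum_append[of c xs y "zs @ [hd w]"] by (simp add: w'_def)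
    also have "\<dots> = wsum c (w' @ [hd w'])" by (simp add: hd)
    also have "\<dots> \<le> 0" using less.hyps[of w'] less.prems by (auto simp: w w'_def)
    finally show ?thesis by simp
  qed
qed

lemma walk_bounded:
  assumes "cyc_ok c V" "finite V"
  defines "M \<equiv> (\<Sum>a\<in>V. \<Sum>b\<in>V. \<bar>c a b\<bar>)"
  shows "set w \<subseteq> V \<Longrightarrow> wsum c w \<le> real (card V) * M"
proof (induction "length w" arbitrary: w rule: less_induct)
  case less
  have M0: "0 \<le> M" unfolding M_def by (simp add: sum_nonneg)
  have cM: "c a b \<le> M" if "a \<in> V" "b \<in> V" for a b
  proof -
    have "c a b \<le> \<bar>c a b\<bar>" by simp
    also have "\<dots> \<le> (\<Sum>b\<in>V. \<bar>c a b\<bar>)" using that assms(2) by (intro member_le_sum) auto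
    also have "\<dots> \<le> M" unfolding M_def using that assms(2) by (intro member_le_sum[of a V "\<lambda>a. \<Sum>b\<in>V. \<bar>c a b\<bar>"]) (auto intro: sum_nonneg)
    finally show ?thesis .
  qed
  show ?case
  proof (cases "distinct w")
    case True
    define c' where "c' a b = (if a \<in> V \<and> b \<in> V then c a b else 0)" for a b
    have "wsum c w = wsum c' w" using less.prems
      by (intro wsum_cong) (auto simp: c'_def)
    also have "\<dots> \<le> real (length w) * M" by (rule wsum_cons_le) (use cM M0 in \<open>auto simp: c'_def\<close>)
    also have "length w \<le> card V" using True less.prems assms(2) by (metis card_mono distinct_card)
    then have "real (length w) * M \<le> real (card V) * M" using M0 by (intro mult_right_mono) auto
    finally show ?thesis .
  next
    case False
    then obtain xs ys zs y where w: "w = xs@[y]@ys@[y]@zs" using not_distinct_decomp by blast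
    have "wsum c w = wsum c (xs @ [y]) + wsum c (y # ys @ [y] @ zs)"
      using wsum_append[of c xs y "ys @ [y] @ zs"] by (simp add: w)
    also have "wsum c (y # ys @ [y] @ zs) = wsum c ((y#ys) @ [hd (y#ys)]) + wsum c (y # zs)"
      using wsum_append[of c "y#ys" y "zs"] by simp
    also have "wsum c ((y#ys) @ [hd (y#ys)]) \<le> 0"
      using closed_walk_le0[OF assms(1), of "y#ys"] less.prems by (auto simp: w)
    also have "wsum c (xs @ [y]) + (0 + wsum c (y # zs)) = wsum c (xs @ [y] @ zs)"
      using wsum_append[of c xs y zs] by simp
    also have "\<dots> \<le> real (card V) * M" using less.hyps[of "xs @ [y] @ zs"] less.prems by (auto simp: w)
    finally show ?thesis by simp
  qed
qed

lemma potentials_exist: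
  assumes "cyc_ok c V" "finite V"
  shows "\<exists>u. \<forall>i\<in>V. \<forall>j\<in>V. c i j \<le> u i - u j"
proof -
  define K where "K = real (card V) * (\<Sum>a\<in>V. \<Sum>b\<in>V. \<bar>c a b\<bar>)"
  define u where "u i = Sup ((\<lambda>w. wsum c (i # w)) ` {w. set w \<subseteq> V})" for i
  have bdd: "bdd_above ((\<lambda>w. wsum c (i # w)) ` {w. set w \<subseteq> V})" if "i \<in> V" for i
    using walk_bounded[OF assms, of "i # _"] that unfolding K_def[symmetric]
    by (intro bdd_aboveI[of _ K]) auto
  show ?thesis
  proof (intro exI ballI)
    fix i j assume ij: "i \<in> V" "j \<in> V"
    have "u j \<le> u i - c i j" unfolding u_def
    proof (rule cSUP_least)
      have "[] \<in> {w. set w \<subseteq> V}" by simp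
      then show "{w. set w \<subseteq> V} \<noteq> {}" by blast
      fix w assume w: "w \<in> {w. set w \<subseteq> V}"
      have "wsum c (i # j # w) \<le> u i" unfolding u_def
        by (rule cSUP_upper[OF _ bdd[OF ij(1)]]) (use w ij in auto)
      then show "wsum c (j # w) \<le> Sup ((\<lambda>w. wsum c (i # w)) ` {w. set w \<subseteq> V}) - c i j"
        by (simp add: u_def)
    qed
    then show "c i j \<le> u i - u j" by simp
  qed
qed

lemma extend_potentials:
  fixes c :: "'a \<Rightarrow> 'a \<Rightarrow> real" and u :: "'a \<Rightarrow> real"
  assumes fin: "finite S" and feas: "\<forall>i\<in>T. \<forall>j\<in>T. c i j \<le> u i - u j" and "T \<noteq> {}" "finite T"
    and tri: "\<And>j a b. j \<in> S \<Longrightarrow> c a j + c j b \<le> c a b" and diag: "\<And>a. c a a = 0"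
  shows "\<exists>u. \<forall>i\<in>T \<union> S. \<forall>j\<in>T \<union> S. c i j \<le> u i - u j"
  using fin tri
proof (induction S rule: finite_induct)
  case empty then show ?case using feas by auto
next
  case (insert j S)
  then obtain u where u: "\<forall>i\<in>T \<union> S. \<forall>k\<in>T \<union> S. c i k \<le> u i - u k" by auto
  show ?case
  proof (cases "j \<in> T")
    case True then show ?thesis using u diag by (intro exI[of _ u]) auto
  next
    case False
    let ?R = "T \<union> S"
    have finR: "finite ?R" "?R \<noteq> {}" using insert assms by auto
    define m where "m = Min ((\<lambda>a. u a - c a j) ` ?R)"
    define u' where "u' = u(j := m)"
    have jR: "j \<notin> ?R" using False insert by auto
    have m_le: "m \<le> u a - c a j" if "a \<in> ?R" for a unfolding m_def using finR that by auto
    have "m \<in> (\<lambda>a. u a - c a j) ` ?R"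
      unfolding m_def using finR by (intro Min_in) auto
    then obtain a0 where a0: "a0 \<in> ?R" "m = u a0 - c a0 j" by auto
    show ?thesis
    proof (intro exI[of _ u'] ballI)
      fix a b assume ab: "a \<in> T \<union> insert j S" "b \<in> T \<union> insert j S"
      show "c a b \<le> u' a - u' b"
      proof (cases "a = j")
        case aj: True
        show ?thesis
        proof (cases "b = j")
          case True then show ?thesis using aj diag by simp
        next
          case False
          then have b: "b \<in> ?R" using ab by auto
          have "c a0 j + c j b \<le> c a0 b" using insert.prems[of j a0 b] by auto
          also have "\<dots> \<le> u a0 - u b" using u a0 b by auto
          finally show ?thesis using aj False a0 by (simp add: u'_def)
        qed
      next
        case anj: False
        then have a: "a \<in> ?R" using ab by auto
        show ?thesis
        proof (cases "b = j")
          case True then show ?thesis using m_le[OF a] anj by (simp add: u'_def)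
        next
          case False then show ?thesis using u a ab anj jR by (auto simp: u'_def)
        qed
      qed
    qed
  qed
qed

lemma potentials_global:
  fixes c :: "'n::finite \<Rightarrow> 'n \<Rightarrow> real"
  assumes "cyc_ok c V" "V \<noteq> {}"
    and tri: "\<And>j a b. j \<notin> V \<Longrightarrow> c a j + c j b \<le> c a b" and diag: "\<And>a. c a a = 0"
  shows "\<exists>u. \<forall>i j. c i j \<le> u i - u j"
proof -
  obtain u where "\<forall>i\<in>V. \<forall>j\<in>V. c i j \<le> u i - u j" using potentials_exist[OF assms(1)] by auto
  from extend_potentials[OF _ this assms(2) _ _ diag, of "UNIV - V"] tri
  obtain u where "\<forall>i\<in>V \<union> (UNIV - V). \<forall>j\<in>V \<union> (UNIV - V). c i j \<le> u i - u j" by auto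
  then show ?thesis by auto
qed

lemma wsum_snoc_sum: "wsum c (vs @ [z]) = (\<Sum>l<length vs. c (vs!l) ((vs@[z])!Suc l))"
proof (induction vs)
  case Nil then show ?case by simp
next
  case (Cons a vs)
  show ?case
  proof (cases vs)
    case Nil then show ?thesis by simp
  next
    case (Cons b ws)
    have "wsum c ((a # vs) @ [z]) = c a b + wsum c (vs @ [z])" by (simp add: Cons)
    also have "\<dots> = c a b + (\<Sum>l<length vs. c (vs!l) ((vs@[z])!Suc l))" using Cons.IH by simp
    also have "\<dots> = (\<Sum>l<length (a#vs). c ((a#vs)!l) (((a#vs)@[z])!Suc l))"
      by (simp only: length_Cons sum.lessThan_Suc_shift) (simp add: Cons)
    finally show ?thesis .
  qed
qed

lemma wsum_cycle: assumes "vs \<noteq> []"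
  shows "wsum c (vs @ [hd vs]) = (\<Sum>l<length vs. c (vs!l) (vs!(Suc l mod length vs)))"
  unfolding wsum_snoc_sum
proof (intro sum.cong refl)
  fix l assume "l \<in> {..<length vs}"
  then show "c (vs ! l) ((vs @ [hd vs]) ! Suc l) = c (vs ! l) (vs ! (Suc l mod length vs))"
    using assms by (cases "Suc l = length vs") (auto simp: nth_append hd_conv_nth)
qed

lemma sum_rotate: "(\<Sum>l<m. h (Suc l mod m)) = (\<Sum>l<(m::nat). h l)"
proof (cases m)
  case 0 then show ?thesis by simp
next
  case (Suc m')
  have "(\<Sum>l<m. h (Suc l mod m)) = (\<Sum>l<m'. h (Suc l mod m)) + h (Suc m' mod m)"
    by (simp add: Suc)
  also have "(\<Sum>l<m'. h (Suc l mod m)) = (\<Sum>l<m'. h (Suc l))"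
    by (intro sum.cong) (auto simp: Suc)
  also have "h (Suc m' mod m) = h 0" by (simp add: Suc)
  also have "(\<Sum>l<m'. h (Suc l)) + h 0 = (\<Sum>l<m. h l)"
    by (simp only: Suc sum.lessThan_Suc_shift add.commute)
  finally show ?thesis .
qed

lemma thr_props:
  fixes X :: "real set"
  assumes up: "\<And>b b'. b \<in> X \<Longrightarrow> b \<le> b' \<Longrightarrow> b' \<in> X" and two: "2 \<in> X"
  defines "B \<equiv> real_of_ereal (max 0 (Inf (ereal ` X)))"
  shows "0 \<le> B" "B \<le> 2" "0 < B \<Longrightarrow> b < B \<Longrightarrow> b \<notin> X" "B < b \<Longrightarrow> b \<in> X"
proof -
  let ?I = "Inf (ereal ` X)"
  have I2: "?I \<le> 2" using two by (intro Inf_lower2[of 2]) auto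
  have fin: "max 0 ?I = ereal B" using I2 unfolding B_def
    by (cases ?I) (auto simp: max_def)
  have B0: "ereal B \<ge> 0" using fin by (metis max.cobounded1)
  then show "0 \<le> B" by simp
  have "max 0 ?I \<le> 2" using I2 by simp
  then have "ereal B \<le> 2" using fin by simp
  then show "B \<le> 2" by simp
  show "b \<notin> X" if "0 < B" "b < B"
  proof
    assume "b \<in> X"
    then have "?I \<le> ereal b" by (intro Inf_lower) auto
    moreover have "max 0 ?I = ?I"
    proof (rule ccontr)
      assume "max 0 ?I \<noteq> ?I"
      then have "max 0 ?I = 0" by (metis max_def)
      then show False using fin \<open>0 < B\<close> by simp
    qed
    ultimately have "ereal B \<le> ereal b" using fin by simp
    then show False using \<open>b < B\<close> by simp
  qed
  assume "B < b"
  moreover have "?I \<le> ereal B" using fin by (metis max.cobounded2)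
  ultimately have "?I < ereal b" by (metis ereal_less_eq(3) order.strict_trans1 order_less_le)
  then obtain x where "x \<in> X" "ereal x < ereal b" by (auto simp: Inf_less_iff)
  then show "b \<in> X" using up[of x b] by auto
qed

lemma vertex_nth: "vertex i $ k = (if k = i then 1 else 0)"
  by (simp add: vertex_def axis_def)

lemma vertex_inj: "vertex i = vertex j \<longleftrightarrow> i = j"
  by (simp add: vertex_def axis_eq_axis)

lemma closed_simplex: "closed (std_simplex :: (real^'n::finite) set)"
proof -
  have "std_simplex = {x::real^'n. \<forall>i. 0 \<le> x$i} \<inter> {x. (\<Sum>i\<in>UNIV. x $ i) = 1}"
    by (auto simp: std_simplex_def)
  also have "closed \<dots>"
    by (intro closed_Int closed_positive_orthant closed_Collect_eq continuous_intros)
  finally show ?thesis .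
qed

lemma simplex_borel: "std_simplex \<in> sets borel"
  by (rule borel_closed[OF closed_simplex])

lemma simplex_bounds: assumes "x \<in> std_simplex" shows "0 \<le> x$i" "x$i \<le> 1"
proof -
  show "0 \<le> x$i" using assms by (auto simp: std_simplex_def)
  have "x$i \<le> (\<Sum>k\<in>UNIV. x$k)" using assms by (intro member_le_sum) (auto simp: std_simplex_def)
  then show "x$i \<le> 1" using assms by (auto simp: std_simplex_def)
qed

lemma cost_vertex: assumes "x \<in> std_simplex" shows "l1_cost x (vertex i) = 2 - 2 * x$i"
proof -
  have "l1_cost x (vertex i) = (\<Sum>k\<in>UNIV. x$k + (if k = i then 1 - 2 * x$k else 0))"
    unfolding l1_cost_def vertex_nth
    by (intro sum.cong refl) (use simplex_bounds[OF assms] in auto)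
  also have "\<dots> = (\<Sum>k\<in>UNIV. x$k) + (1 - 2 * x$i)" by (simp add: sum.distrib)
  finally show ?thesis using assms by (simp add: std_simplex_def)
qed

lemma borel_cost: "(\<lambda>z::((real^'n::finite) \<times> (real^'n)). l1_cost (fst z) (snd z)) \<in> borel_measurable borel"
  unfolding l1_cost_def by (intro borel_measurable_continuous_onI continuous_intros)

locale OT =
  fixes p q :: "(real^'n::finite) measure" and \<gamma> :: "((real^'n) \<times> (real^'n)) measure"
  assumes pp: "prob_space p" "sets p = sets borel" "emeasure p std_simplex = 1"
    and qq: "prob_space q" "sets q = sets borel" "emeasure q (range vertex) = 1"
    and opt: "optimal_coupling p q \<gamma>"
begin

lemma coup: "prob_space \<gamma>" "sets \<gamma> = sets (borel \<Otimes>\<^sub>M borel)" "distr \<gamma> borel fst = p" "distr \<gamma> borel snd = q"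
  using opt by (auto simp: optimal_coupling_def is_coupling_def)

lemma sets_g: "sets \<gamma> = sets borel"
proof -
  have "sets (borel \<Otimes>\<^sub>M borel) = sets (borel :: ((real^'n) \<times> (real^'n)) measure)"
    by (rule arg_cong[OF borel_prod])
  then show ?thesis using coup(2) by simp
qed

lemma prod_sets: "A \<in> sets borel \<Longrightarrow> B \<in> sets borel \<Longrightarrow> A \<times> B \<in> sets \<gamma>"
  unfolding coup(2) by (rule pair_measureI)

lemma space_g: "space \<gamma> = UNIV" using sets_eq_imp_space_eq[OF sets_g] by simp

lemma fin_g: "finite_measure \<gamma>" using coup(1) by (simp add: prob_space_def)

lemma margq: assumes "A \<in> sets borel" shows "emeasure \<gamma> (UNIV \<times> A) = emeasure q A"
proof -
  have sm: "snd \<in> measurable \<gamma> borel"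
    unfolding measurable_cong_sets[OF coup(2) refl] by (rule measurable_snd)
  have "emeasure q A = emeasure (distr \<gamma> borel snd) A" using coup(4) by simp
  also have "\<dots> = emeasure \<gamma> (snd -` A \<inter> space \<gamma>)" by (rule emeasure_distr[OF sm assms])
  also have "snd -` A \<inter> space \<gamma> = UNIV \<times> A" by (auto simp: space_g)
  finally show ?thesis ..
qed

lemma margp: assumes "A \<in> sets borel" shows "emeasure \<gamma> (A \<times> UNIV) = emeasure p A"
proof -
  have sm: "fst \<in> measurable \<gamma> borel"
    unfolding measurable_cong_sets[OF coup(2) refl] by (rule measurable_fst)
  have "emeasure p A = emeasure (distr \<gamma> borel fst) A" using coup(3) by simp
  also have "\<dots> = emeasure \<gamma> (fst -` A \<inter> space \<gamma>)" by (rule emeasure_distr[OF sm assms])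
  also have "fst -` A \<inter> space \<gamma> = A \<times> UNIV" by (auto simp: space_g)
  finally show ?thesis ..
qed

lemma range_vertex_borel: "range vertex \<in> sets borel"
  by (intro borel_closed finite_imp_closed) auto

lemma vertex_borel: "{vertex i} \<in> sets borel"
  by (intro borel_closed closed_singleton)

lemma null1: "(UNIV - std_simplex) \<times> UNIV \<in> null_sets \<gamma>"
proof -
  have sp: "space p = UNIV" using sets_eq_imp_space_eq[OF pp(2)] by simp
  have "emeasure p (UNIV - std_simplex) = emeasure p UNIV - emeasure p std_simplex"
    using pp(2,3) by (intro emeasure_Diff) (auto simp: simplex_borel)
  also have "emeasure p UNIV = 1" using prob_space.emeasure_space_1[OF pp(1)] sp by simp
  finally have "emeasure p (UNIV - std_simplex) = 0" using pp(3) by simp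
  moreover have Sb: "UNIV - std_simplex \<in> sets borel"
    using borel_open[OF open_Diff[OF open_UNIV closed_simplex]] .
  ultimately show ?thesis
    using margp[OF Sb] prod_sets[OF Sb sets.top[of borel, unfolded space_borel]]
    by (intro null_setsI) simp_all
qed

lemma null2: "UNIV \<times> (UNIV - range vertex) \<in> null_sets \<gamma>"
proof -
  have sp: "space q = UNIV" using sets_eq_imp_space_eq[OF qq(2)] by simp
  have "emeasure q (UNIV - range vertex) = emeasure q UNIV - emeasure q (range vertex)"
    using qq(2,3) by (intro emeasure_Diff) (auto simp: range_vertex_borel)
  also have "emeasure q UNIV = 1" using prob_space.emeasure_space_1[OF qq(1)] sp by simp
  finally have "emeasure q (UNIV - range vertex) = 0" using qq(3) by simp
  moreover have Sb: "UNIV - range vertex \<in> sets borel"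
    by (intro borel_open open_Diff open_UNIV finite_imp_closed) auto
  ultimately show ?thesis
    using margq[OF Sb] prod_sets[OF sets.top[of borel, unfolded space_borel] Sb]
    by (intro null_setsI) simp_all
qed

lemma AE_supp: "AE z in \<gamma>. fst z \<in> std_simplex \<and> snd z \<in> range vertex"
  by (rule AE_I'[OF null_sets.Un[OF null1 null2]]) auto

lemma meas_col: "measure \<gamma> (std_simplex \<times> {vertex i}) = measure q {vertex i}"
proof -
  have "std_simplex \<times> {vertex i} = UNIV \<times> {vertex i} - (UNIV - std_simplex) \<times> UNIV" by auto
  moreover have "emeasure \<gamma> (UNIV \<times> {vertex i} - (UNIV - std_simplex) \<times> UNIV) = emeasure \<gamma> (UNIV \<times> {vertex i})"
    by (rule emeasure_Diff_null_set[OF null1 prod_sets[OF sets.top[of borel, unfolded space_borel] vertex_borel]])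
  ultimately have "emeasure \<gamma> (std_simplex \<times> {vertex i}) = emeasure \<gamma> (UNIV \<times> {vertex i})" by metis
  also have "\<dots> = emeasure q {vertex i}" by (rule margq[OF vertex_borel])
  finally show ?thesis by (simp add: measure_def)
qed

lemma meas_le: "measure \<gamma> (A \<times> {vertex i}) \<le> measure q {vertex i}"
proof -
  have "measure \<gamma> (A \<times> {vertex i}) \<le> measure \<gamma> (UNIV \<times> {vertex i})"
    using prod_sets[OF _ vertex_borel, of UNIV] by (intro finite_measure.finite_measure_mono[OF fin_g]) auto
  also have "\<dots> = measure q {vertex i}" using margq[OF vertex_borel] by (simp add: measure_def)
  finally show ?thesis .
qed

definition SS :: "'n \<Rightarrow> 'n \<Rightarrow> real \<Rightarrow> (real^'n) set" where
  "SS i j b = {x \<in> std_simplex. x$j - x$i \<le> b - 1}"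

definition XX :: "'n \<Rightarrow> 'n \<Rightarrow> real set" where
  "XX i j = {b. measure \<gamma> (SS i j b \<times> {vertex i}) = measure q {vertex i}}"

lemma B_eq: "B_thr \<gamma> q i j = real_of_ereal (max 0 (Inf (ereal ` XX i j)))"
  by (simp add: B_thr_def XX_def SS_def)

lemma SS_borel: "SS i j b \<in> sets borel"
proof -
  have "SS i j b = std_simplex \<inter> {x. x$j - x$i \<le> b - 1}" by (auto simp: SS_def)
  also have "\<dots> \<in> sets borel"
    by (intro borel_closed closed_Int closed_simplex closed_Collect_le continuous_intros)
  finally show ?thesis .
qed

lemma XX_up: assumes "b \<in> XX i j" "b \<le> b'" shows "b' \<in> XX i j"
proof -
  have "measure q {vertex i} = measure \<gamma> (SS i j b \<times> {vertex i})" using assms by (simp add: XX_def)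
  also have "\<dots> \<le> measure \<gamma> (SS i j b' \<times> {vertex i})"
    using prod_sets[OF SS_borel vertex_borel] assms(2)
    by (intro finite_measure.finite_measure_mono[OF fin_g]) (auto simp: SS_def)
  finally show ?thesis using meas_le[of "SS i j b'" i] by (simp add: XX_def)
qed

lemma XX_2: "2 \<in> XX i j"
proof -
  have "x$j - x$i \<le> 1" if "x \<in> std_simplex" for x
    using simplex_bounds[OF that, of j] simplex_bounds[OF that, of i] by linarith
  then have "SS i j 2 = std_simplex" by (auto simp: SS_def)
  then show ?thesis using meas_col by (simp add: XX_def)
qed

lemma Bp: "0 \<le> B_thr \<gamma> q i j" "B_thr \<gamma> q i j \<le> 2"
  "0 < B_thr \<gamma> q i j \<Longrightarrow> b < B_thr \<gamma> q i j \<Longrightarrow> b \<notin> XX i j"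
  "B_thr \<gamma> q i j < b \<Longrightarrow> b \<in> XX i j"
proof -
  have up: "\<And>b b'. b \<in> XX i j \<Longrightarrow> b \<le> b' \<Longrightarrow> b' \<in> XX i j" by (rule XX_up)
  note th = thr_props[of "XX i j", OF up XX_2]
  show "0 \<le> B_thr \<gamma> q i j" unfolding B_eq by (rule th(1))
  show "B_thr \<gamma> q i j \<le> 2" unfolding B_eq by (rule th(2))
  show "0 < B_thr \<gamma> q i j \<Longrightarrow> b < B_thr \<gamma> q i j \<Longrightarrow> b \<notin> XX i j"
    unfolding B_eq by (rule th(3))
  show "B_thr \<gamma> q i j < b \<Longrightarrow> b \<in> XX i j" unfolding B_eq by (rule th(4))
qed

lemma B_pos_mass:
  assumes "0 < measure q {vertex i}" "0 < \<epsilon>"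
  shows "0 < measure \<gamma> ({x \<in> std_simplex. B_thr \<gamma> q i j - 1 - \<epsilon> < x$j - x$i} \<times> {vertex i})"
proof -
  let ?B = "B_thr \<gamma> q i j"
  define E where "E = {x \<in> std_simplex. ?B - 1 - \<epsilon> < x$j - x$i}"
  have "0 < measure \<gamma> (E \<times> {vertex i})"
  proof (rule ccontr)
    assume "\<not> 0 < measure \<gamma> (E \<times> {vertex i})"
    then have E0: "measure \<gamma> (E \<times> {vertex i}) = 0"
      using measure_nonneg[of \<gamma> "E \<times> {vertex i}"] by linarith
    have Eb: "E \<in> sets borel"
    proof -
      have "E = std_simplex \<inter> {x. ?B - 1 - \<epsilon> < x$j - x$i}" by (auto simp: E_def)
      also have "\<dots> \<in> sets borel"
        by (intro sets.Int simplex_borel borel_open open_Collect_less continuous_intros)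
      finally show ?thesis .
    qed
    have un: "std_simplex \<times> {vertex i} = SS i j (?B - \<epsilon>) \<times> {vertex i} \<union> E \<times> {vertex i}"
      by (auto simp: SS_def E_def)
    have dj: "(SS i j (?B - \<epsilon>) \<times> {vertex i}) \<inter> (E \<times> {vertex i}) = {}"
      by (auto simp: SS_def E_def)
    have "measure \<gamma> (std_simplex \<times> {vertex i}) = measure \<gamma> (SS i j (?B - \<epsilon>) \<times> {vertex i}) + measure \<gamma> (E \<times> {vertex i})"
      unfolding un by (rule finite_measure.finite_measure_Union[OF fin_g prod_sets[OF SS_borel vertex_borel] prod_sets[OF Eb vertex_borel] dj])
    then have inX: "?B - \<epsilon> \<in> XX i j" using E0 meas_col by (simp add: XX_def)
    show False
    proof (cases "0 < ?B")
      case True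
      then show False using Bp(3)[of i j "?B - \<epsilon>"] inX assms by simp
    next
      case False
      then have "?B = 0" using Bp(1)[of i j] by simp
      moreover have "-1 \<le> x$j - x$i" if "x \<in> std_simplex" for x
        using simplex_bounds[OF that, of j] simplex_bounds[OF that, of i] by linarith
      ultimately have "E = std_simplex" using assms(2) unfolding E_def by force
      then show False using E0 meas_col assms(1) by simp
    qed
  qed
  then show ?thesis by (simp add: E_def)
qed

lemma B_zero_mass: assumes "measure q {vertex i} = 0" shows "B_thr \<gamma> q i j = 0"
proof (rule ccontr)
  assume "B_thr \<gamma> q i j \<noteq> 0"
  then have pos: "0 < B_thr \<gamma> q i j" using Bp(1)[of i j] by simp
  have "0 \<in> XX i j" using meas_le[of "SS i j 0" i] assms measure_nonneg[of \<gamma> "SS i j 0 \<times> {vertex i}"]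
    by (simp add: XX_def)
  then show False using Bp(3)[OF pos, of 0] pos by simp
qed

lemma B_tri: "B_thr \<gamma> q i j \<le> B_thr \<gamma> q i k + 1"
proof (rule ccontr)
  let ?Bj = "B_thr \<gamma> q i j" and ?Bk = "B_thr \<gamma> q i k"
  assume neg: "\<not> ?thesis"
  define b where "b = (?Bj + ?Bk + 1) / 2"
  have "b - 1 \<in> XX i k" using Bp(4)[of i k "b - 1"] neg by (simp add: b_def)
  have "b \<in> XX i j"
  proof -
    have "measure q {vertex i} = measure \<gamma> (SS i k (b - 1) \<times> {vertex i})"
      using \<open>b - 1 \<in> XX i k\<close> by (simp add: XX_def)
    also have "\<dots> \<le> measure \<gamma> (SS i j b \<times> {vertex i})"
    proof (intro finite_measure.finite_measure_mono[OF fin_g] prod_sets SS_borel vertex_borel)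
      have "x$j - x$i \<le> b - 1" if "x \<in> std_simplex" "x$k - x$i \<le> b - 2" for x
        using simplex_bounds[OF that(1), of j] simplex_bounds[OF that(1), of k] that(2) by linarith
      then show "SS i k (b - 1) \<times> {vertex i} \<subseteq> SS i j b \<times> {vertex i}" by (auto simp: SS_def)
    qed
    finally show ?thesis using meas_le[of "SS i j b" i] by (simp add: XX_def)
  qed
  moreover have "0 < ?Bj" using neg Bp(1)[of i k] by simp
  ultimately show False using Bp(3)[of i j b] neg by (simp add: b_def)
qed

end

context OT begin

lemma comp_meas: "(\<lambda>z. fst z $ k) \<in> borel_measurable \<gamma>"
  unfolding measurable_cong_sets[OF sets_g refl]
  by (intro borel_measurable_continuous_onI continuous_intros)

lemma cost_meas: "(\<lambda>z. ennreal (l1_cost (fst z) (snd z))) \<in> borel_measurable (borel \<Otimes>\<^sub>M borel)"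
  unfolding borel_prod using borel_cost by measurable

lemma cycle_nonpos:
  assumes dist: "distinct vs" and VS: "set vs \<subseteq> {i. 0 < measure q {vertex i}}" and m2: "2 \<le> length vs"
  shows "(\<Sum>l<length vs. B_thr \<gamma> q (vs!l) (vs!(Suc l mod length vs)) - 1) \<le> 0"
proof (rule ccontr)
  define m where "m = length vs"
  define I where "I l = vs ! l" for l
  define J where "J l = vs ! (Suc l mod m)" for l
  define s where "s = (\<Sum>l<m. B_thr \<gamma> q (I l) (J l) - 1)"
  assume "\<not> ?thesis"
  then have s_pos: "0 < s" by (simp add: s_def I_def J_def m_def)
  have m_pos: "0 < m" using m2 unfolding m_def by linarith
  define \<epsilon> where "\<epsilon> = s / (2 * m)"
  have eps_pos: "0 < \<epsilon>" using s_pos m_pos by (simp add: \<epsilon>_def)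
  define t where "t l = B_thr \<gamma> q (I l) (J l) - 1 - \<epsilon>" for l
  define E where "E l = {x \<in> std_simplex. t l < x$J l - x$I l}" for l
  define F where "F l = E l \<times> {vertex (I l)}" for l
  define \<mu> where "\<mu> l = measure \<gamma> (F l)" for l
  have Eb: "E l \<in> sets borel" for l
  proof -
    have "E l = std_simplex \<inter> {x. t l < x$J l - x$I l}" by (auto simp: E_def)
    also have "\<dots> \<in> sets borel"
      by (intro sets.Int simplex_borel borel_open open_Collect_less continuous_intros)
    finally show ?thesis .
  qed
  have Fs[measurable]: "F l \<in> sets \<gamma>" for l unfolding F_def by (intro prod_sets Eb vertex_borel)
  have Iin: "0 < measure q {vertex (I l)}" if "l < m" for l
    using subsetD[OF VS nth_mem[of l vs]] that unfolding I_def m_def by simp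
  have mu_pos: "0 < \<mu> l" if "l < m" for l
    using B_pos_mass[OF Iin[OF that] eps_pos, of "J l"] by (simp add: \<mu>_def F_def E_def t_def)
  define \<delta> where "\<delta> = Min (\<mu> ` {..<m})"
  have delta_in: "\<delta> \<in> \<mu> ` {..<m}" unfolding \<delta>_def using m_pos by (intro Min_in) auto
  have delta_pos: "0 < \<delta>" using delta_in mu_pos by auto
  have delta_le: "\<delta> \<le> \<mu> l" if "l < m" for l unfolding \<delta>_def using that by auto
  define r where "r l = \<delta> / \<mu> l" for l
  have r_pos: "0 < r l" and r_le: "r l \<le> 1" and r_mu: "r l * \<mu> l = \<delta>" if "l < m" for l
    using delta_pos mu_pos[OF that] delta_le[OF that] by (auto simp: r_def)
  have Fdisj: "z \<notin> F l'" if "z \<in> F l" "l < m" "l' < m" "l \<noteq> l'" for z l l'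
  proof -
    have "I l \<noteq> I l'" using that dist by (simp add: I_def m_def nth_eq_iff_index_eq)
    then show ?thesis using that by (auto simp: F_def vertex_inj)
  qed
  define a where "a z = (\<Sum>l<m. ennreal (r l) * indicator (F l) z)" for z
  have a_le: "a z \<le> 1" for z
  proof (cases "\<exists>l<m. z \<in> F l")
    case True
    then obtain l where l: "l < m" "z \<in> F l" by auto
    have "a z = (\<Sum>l'\<in>{l}. ennreal (r l') * indicator (F l') z)" unfolding a_def
      using l Fdisj by (intro sum.mono_neutral_right) auto
    also have "\<dots> \<le> 1" using r_le[OF l(1)] l by simp
    finally show ?thesis .
  next
    case False then have "a z = 0" by (auto simp: a_def)
    then show ?thesis by simp
  qed
  have am[measurable]: "a \<in> borel_measurable \<gamma>" unfolding a_def by measurable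
  define W where "W n z = (if n = 0 then 1 - a z else ennreal (r (n - 1)) * indicator (F (n - 1)) z)" for n z
  define P :: "nat \<Rightarrow> (real^'n) \<times> (real^'n) \<Rightarrow> (real^'n) \<times> (real^'n)"
    where "P n z = (if n = 0 then z else (fst z, vertex (J (n - 1))))" for n z
  have Wm[measurable]: "(\<lambda>z. W n z) \<in> borel_measurable \<gamma>" for n unfolding W_def by measurable
  have Pm[measurable]: "(\<lambda>z. P n z) \<in> measurable \<gamma> (borel \<Otimes>\<^sub>M borel)" for n
    unfolding P_def measurable_cong_sets[OF coup(2) refl] by measurable
  have Wsum: "(\<Sum>n\<le>m. W n z) = 1" for z
  proof -
    have "(\<Sum>n\<le>m. W n z) = W 0 z + (\<Sum>l<m. W (Suc l) z)" by (rule sum.atMost_shift)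
    also have "\<dots> = (1 - a z) + a z" by (simp add: W_def a_def)
    also have "\<dots> = 1" using a_le[of z] by (simp add: diff_add_cancel_ennreal)
    finally show ?thesis .
  qed
  let ?C = "count_space {..m}"
  define G where "G = density (\<gamma> \<Otimes>\<^sub>M ?C) (\<lambda>y. W (snd y) (fst y))"
  define \<gamma>' where "\<gamma>' = distr G (borel \<Otimes>\<^sub>M borel) (\<lambda>y. P (snd y) (fst y))"
  interpret C: sigma_finite_measure ?C by (rule sigma_finite_measure_count_space_finite) simp
  have Wm2[measurable]: "(\<lambda>y. W (snd y) (fst y)) \<in> borel_measurable (\<gamma> \<Otimes>\<^sub>M ?C)"
    by (rule measurable_compose_countable'[where I="{..m}", OF measurable_compose[OF measurable_fst Wm] measurable_snd]) simp
  have Pm2[measurable]: "(\<lambda>y. P (snd y) (fst y)) \<in> measurable (\<gamma> \<Otimes>\<^sub>M ?C) (borel \<Otimes>\<^sub>M borel)"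
    by (rule measurable_compose_countable'[where I="{..m}", OF measurable_compose[OF measurable_fst Pm] measurable_snd]) simp
  have K: "(\<integral>\<^sup>+ x. f x \<partial>\<gamma>') = (\<Sum>n\<le>m. \<integral>\<^sup>+ z. W n z * f (P n z) \<partial>\<gamma>)"
    if f[measurable]: "f \<in> borel_measurable (borel \<Otimes>\<^sub>M borel)" for f
  proof -
    have "(\<integral>\<^sup>+ x. f x \<partial>\<gamma>') = (\<integral>\<^sup>+ y. f (P (snd y) (fst y)) \<partial>G)"
      unfolding \<gamma>'_def by (rule nn_integral_distr) (simp_all add: G_def)
    also have "\<dots> = (\<integral>\<^sup>+ y. W (snd y) (fst y) * f (P (snd y) (fst y)) \<partial>(\<gamma> \<Otimes>\<^sub>M ?C))"
      unfolding G_def by (rule nn_integral_density) measurable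
    also have "\<dots> = (\<integral>\<^sup>+ z. \<integral>\<^sup>+ n. W n z * f (P n z) \<partial>?C \<partial>\<gamma>)"
      using C.nn_integral_fst[of "\<lambda>y. W (snd y) (fst y) * f (P (snd y) (fst y))" \<gamma>] by simp
    also have "\<dots> = (\<integral>\<^sup>+ z. (\<Sum>n\<le>m. W n z * f (P n z)) \<partial>\<gamma>)"
      by (intro nn_integral_cong) (simp add: nn_integral_count_space_finite)
    also have "\<dots> = (\<Sum>n\<le>m. \<integral>\<^sup>+ z. W n z * f (P n z) \<partial>\<gamma>)"
      by (rule nn_integral_sum) measurable
    finally show ?thesis .
  qed
  have D: "(\<integral>\<^sup>+ z. h z \<partial>\<gamma>) = (\<Sum>n\<le>m. \<integral>\<^sup>+ z. W n z * h z \<partial>\<gamma>)"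
    if h[measurable]: "h \<in> borel_measurable \<gamma>" for h
  proof -
    have "(\<integral>\<^sup>+ z. h z \<partial>\<gamma>) = (\<integral>\<^sup>+ z. (\<Sum>n\<le>m. W n z * h z) \<partial>\<gamma>)"
      by (intro nn_integral_cong) (simp add: sum_distrib_right[symmetric] Wsum)
    also have "\<dots> = (\<Sum>n\<le>m. \<integral>\<^sup>+ z. W n z * h z \<partial>\<gamma>)"
      by (rule nn_integral_sum) measurable
    finally show ?thesis .
  qed
  have UNIVb: "UNIV \<in> sets borel" by (metis sets.top space_borel)
  have sets_g': "sets \<gamma>' = sets (borel \<Otimes>\<^sub>M borel)" by (simp add: \<gamma>'_def)
  have space_g': "space \<gamma>' = UNIV" by (simp add: \<gamma>'_def space_pair_measure)
  have Fint: "(\<integral>\<^sup>+ z. ennreal (r l) * indicator (F l) z * k \<partial>\<gamma>) = ennreal \<delta> * k" if l: "l < m" for l k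
  proof -
    have "(\<integral>\<^sup>+ z. ennreal (r l) * indicator (F l) z * k \<partial>\<gamma>) = (\<integral>\<^sup>+ z. (ennreal (r l) * k) * indicator (F l) z \<partial>\<gamma>)"
      by (simp add: mult_ac)
    also have "\<dots> = ennreal (r l) * k * emeasure \<gamma> (F l)" by (rule nn_integral_cmult_indicator[OF Fs])
    also have "emeasure \<gamma> (F l) = ennreal (\<mu> l)"
      unfolding \<mu>_def by (rule finite_measure.emeasure_eq_measure[OF fin_g])
    also have "ennreal (r l) * k * ennreal (\<mu> l) = ennreal (r l * \<mu> l) * k"
    proof -
      have "ennreal (r l * \<mu> l) = ennreal (r l) * ennreal (\<mu> l)" by (rule ennreal_mult') (use r_pos[OF l] in simp)
      then show ?thesis by (simp add: mult_ac)
    qed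
    finally show ?thesis using r_mu[OF l] by simp
  qed
  have mf: "emeasure \<gamma>' (A \<times> UNIV) = emeasure \<gamma> (A \<times> UNIV)" if A: "A \<in> sets borel" for A
  proof -
    have AS[measurable]: "A \<times> UNIV \<in> sets (borel \<Otimes>\<^sub>M borel)" using A UNIVb by (intro pair_measureI)
    have AS2[measurable]: "A \<times> UNIV \<in> sets \<gamma>" using A UNIVb by (intro prod_sets)
    have "emeasure \<gamma>' (A \<times> UNIV) = (\<integral>\<^sup>+ x. indicator (A \<times> UNIV) x \<partial>\<gamma>')" using AS sets_g' by simp
    also have "\<dots> = (\<Sum>n\<le>m. \<integral>\<^sup>+ z. W n z * indicator (A \<times> UNIV) (P n z) \<partial>\<gamma>)" by (rule K) measurable
    also have "\<dots> = (\<Sum>n\<le>m. \<integral>\<^sup>+ z. W n z * indicator (A \<times> UNIV) z \<partial>\<gamma>)"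
      by (intro sum.cong nn_integral_cong refl) (simp add: P_def indicator_def mem_Times_iff)
    also have "\<dots> = (\<integral>\<^sup>+ z. indicator (A \<times> UNIV) z \<partial>\<gamma>)" by (rule D[symmetric]) measurable
    also have "\<dots> = emeasure \<gamma> (A \<times> UNIV)" using AS2 by simp
    finally show ?thesis .
  qed
  have ms: "emeasure \<gamma>' (UNIV \<times> A) = emeasure \<gamma> (UNIV \<times> A)" if A: "A \<in> sets borel" for A
  proof -
    have AS[measurable]: "UNIV \<times> A \<in> sets (borel \<Otimes>\<^sub>M borel)" using A UNIVb by (intro pair_measureI)
    have AS2[measurable]: "UNIV \<times> A \<in> sets \<gamma>" using A UNIVb by (intro prod_sets)
    let ?T0 = "\<integral>\<^sup>+ z. W 0 z * indicator (UNIV \<times> A) z \<partial>\<gamma>"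
    have "emeasure \<gamma>' (UNIV \<times> A) = (\<integral>\<^sup>+ x. indicator (UNIV \<times> A) x \<partial>\<gamma>')" using AS sets_g' by simp
    also have "\<dots> = (\<Sum>n\<le>m. \<integral>\<^sup>+ z. W n z * indicator (UNIV \<times> A) (P n z) \<partial>\<gamma>)" by (rule K) measurable
    also have "\<dots> = ?T0 + (\<Sum>l<m. \<integral>\<^sup>+ z. W (Suc l) z * indicator (UNIV \<times> A) (P (Suc l) z) \<partial>\<gamma>)"
      by (subst sum.atMost_shift) (simp add: P_def)
    also have "(\<Sum>l<m. \<integral>\<^sup>+ z. W (Suc l) z * indicator (UNIV \<times> A) (P (Suc l) z) \<partial>\<gamma>)
        = (\<Sum>l<m. ennreal \<delta> * indicator A (vertex (vs ! (Suc l mod m))))"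
    proof (intro sum.cong refl)
      fix l assume l: "l \<in> {..<m}"
      have "(\<integral>\<^sup>+ z. W (Suc l) z * indicator (UNIV \<times> A) (P (Suc l) z) \<partial>\<gamma>)
          = (\<integral>\<^sup>+ z. ennreal (r l) * indicator (F l) z * indicator A (vertex (J l)) \<partial>\<gamma>)"
        by (intro nn_integral_cong) (simp add: W_def P_def indicator_def)
      also have "\<dots> = ennreal \<delta> * indicator A (vertex (J l))" using l by (intro Fint) simp
      finally show "(\<integral>\<^sup>+ z. W (Suc l) z * indicator (UNIV \<times> A) (P (Suc l) z) \<partial>\<gamma>)
          = ennreal \<delta> * indicator A (vertex (vs ! (Suc l mod m)))" by (simp add: J_def)
    qed
    also have "(\<Sum>l<m. ennreal \<delta> * indicator A (vertex (vs ! (Suc l mod m))))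
        = (\<Sum>l<m. ennreal \<delta> * indicator A (vertex (vs ! l)))"
      by (rule sum_rotate)
    also have "(\<Sum>l<m. ennreal \<delta> * indicator A (vertex (vs ! l)))
        = (\<Sum>l<m. \<integral>\<^sup>+ z. W (Suc l) z * indicator (UNIV \<times> A) z \<partial>\<gamma>)"
    proof (intro sum.cong refl)
      fix l assume l: "l \<in> {..<m}"
      have "(\<integral>\<^sup>+ z. W (Suc l) z * indicator (UNIV \<times> A) z \<partial>\<gamma>)
          = (\<integral>\<^sup>+ z. ennreal (r l) * indicator (F l) z * indicator A (vertex (I l)) \<partial>\<gamma>)"
        by (intro nn_integral_cong) (auto simp: W_def F_def indicator_def)
      also have "\<dots> = ennreal \<delta> * indicator A (vertex (I l))" using l by (intro Fint) simp
      finally show "ennreal \<delta> * indicator A (vertex (vs ! l)) = (\<integral>\<^sup>+ z. W (Suc l) z * indicator (UNIV \<times> A) z \<partial>\<gamma>)"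
        by (simp add: I_def)
    qed
    also have "?T0 + \<dots> = (\<Sum>n\<le>m. \<integral>\<^sup>+ z. W n z * indicator (UNIV \<times> A) z \<partial>\<gamma>)"
      by (subst sum.atMost_shift) simp
    also have "\<dots> = (\<integral>\<^sup>+ z. indicator (UNIV \<times> A) z \<partial>\<gamma>)" by (rule D[symmetric]) measurable
    also have "\<dots> = emeasure \<gamma> (UNIV \<times> A)" using AS2 by simp
    finally show ?thesis .
  qed
  have pg': "prob_space \<gamma>'"
  proof (rule prob_spaceI)
    have "emeasure \<gamma>' (UNIV \<times> UNIV) = emeasure \<gamma> (UNIV \<times> UNIV)" by (rule mf[OF UNIVb])
    also have "\<dots> = 1" using prob_space.emeasure_space_1[OF coup(1)] space_g by simp
    finally show "emeasure \<gamma>' (space \<gamma>') = 1" using space_g' by simp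
  qed
  have fm': "fst \<in> measurable \<gamma>' borel" "snd \<in> measurable \<gamma>' borel"
    unfolding measurable_cong_sets[OF sets_g' refl] by (rule measurable_fst, rule measurable_snd)
  have coup': "is_coupling p q \<gamma>'"
    unfolding is_coupling_def
  proof (intro conjI pg' sets_g')
    show "distr \<gamma>' borel fst = p"
    proof (rule measure_eqI)
      show "sets (distr \<gamma>' borel fst) = sets p" using pp(2) by simp
      fix A assume "A \<in> sets (distr \<gamma>' borel fst)"
      then have A: "A \<in> sets borel" by simp
      have "emeasure (distr \<gamma>' borel fst) A = emeasure \<gamma>' (fst -` A \<inter> space \<gamma>')"
        by (rule emeasure_distr[OF fm'(1) A])
      also have "fst -` A \<inter> space \<gamma>' = A \<times> UNIV" using space_g' by auto
      also have "emeasure \<gamma>' (A \<times> UNIV) = emeasure p A" using mf[OF A] margp[OF A] by simp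
      finally show "emeasure (distr \<gamma>' borel fst) A = emeasure p A" .
    qed
    show "distr \<gamma>' borel snd = q"
    proof (rule measure_eqI)
      show "sets (distr \<gamma>' borel snd) = sets q" using qq(2) by simp
      fix A assume "A \<in> sets (distr \<gamma>' borel snd)"
      then have A: "A \<in> sets borel" by simp
      have "emeasure (distr \<gamma>' borel snd) A = emeasure \<gamma>' (snd -` A \<inter> space \<gamma>')"
        by (rule emeasure_distr[OF fm'(2) A])
      also have "snd -` A \<inter> space \<gamma>' = UNIV \<times> A" using space_g' by auto
      also have "emeasure \<gamma>' (UNIV \<times> A) = emeasure q A" using ms[OF A] margq[OF A] by simp
      finally show "emeasure (distr \<gamma>' borel snd) A = emeasure q A" .
    qed
  qed
  define c :: "(real^'n) \<times> (real^'n) \<Rightarrow> ennreal" where "c z = ennreal (l1_cost (fst z) (snd z))" for z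
  have cm[measurable]: "c \<in> borel_measurable (borel \<Otimes>\<^sub>M borel)" unfolding c_def by (rule cost_meas)
  have cg[measurable]: "c \<in> borel_measurable \<gamma>" using cm unfolding measurable_cong_sets[OF coup(2) refl] .
  have le: "(\<integral>\<^sup>+ z. c z \<partial>\<gamma>) \<le> (\<integral>\<^sup>+ z. c z \<partial>\<gamma>')"
    using opt coup' unfolding optimal_coupling_def c_def by blast
  have cfin: "(\<integral>\<^sup>+ z. c z \<partial>\<gamma>) \<le> 2"
  proof -
    have "(\<integral>\<^sup>+ z. c z \<partial>\<gamma>) \<le> (\<integral>\<^sup>+ z. 2 \<partial>\<gamma>)"
    proof (rule nn_integral_mono_AE)
      show "AE z in \<gamma>. c z \<le> 2" using AE_supp
      proof eventually_elim
        fix z :: "(real^'n) \<times> (real^'n)" assume "fst z \<in> std_simplex \<and> snd z \<in> range vertex"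
        then obtain i where z: "fst z \<in> std_simplex" "snd z = vertex i" by auto
        have "c z = ennreal (2 - 2 * fst z $ i)" using z cost_vertex[OF z(1), of i] by (simp add: c_def)
        also have "\<dots> \<le> ennreal 2" by (rule ennreal_leI) (use simplex_bounds[OF z(1), of i] in simp)
        finally show "c z \<le> 2" by simp
      qed
    qed
    also have "\<dots> = 2" using prob_space.emeasure_space_1[OF coup(1)] by simp
    finally show ?thesis .
  qed
  let ?T0 = "\<integral>\<^sup>+ z. W 0 z * c z \<partial>\<gamma>"
  have T0fin: "?T0 \<noteq> \<infinity>"
  proof -
    have W0le: "W 0 z * c z \<le> c z" for z
    proof -
      have "W 0 z \<le> 1" by (simp add: W_def)
      then have "W 0 z * c z \<le> 1 * c z" by (rule mult_right_mono) simp
      then show ?thesis by simp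
    qed
    have "?T0 \<le> (\<integral>\<^sup>+ z. c z \<partial>\<gamma>)"
      by (intro nn_integral_mono W0le)
    then show ?thesis using cfin by (metis ennreal_numeral infinity_ennreal_def neq_top_trans top_neq_ennreal)
  qed
  have "(\<integral>\<^sup>+ z. c z \<partial>\<gamma>') = ?T0 + (\<Sum>l<m. \<integral>\<^sup>+ z. W (Suc l) z * c (P (Suc l) z) \<partial>\<gamma>)"
    unfolding K[OF cm] by (subst sum.atMost_shift) (simp add: P_def)
  moreover have "(\<integral>\<^sup>+ z. c z \<partial>\<gamma>) = ?T0 + (\<Sum>l<m. \<integral>\<^sup>+ z. W (Suc l) z * c z \<partial>\<gamma>)"
    unfolding D[OF cg] by (subst sum.atMost_shift) simp
  ultimately have XY: "(\<Sum>l<m. \<integral>\<^sup>+ z. W (Suc l) z * c z \<partial>\<gamma>) \<le> (\<Sum>l<m. \<integral>\<^sup>+ z. W (Suc l) z * c (P (Suc l) z) \<partial>\<gamma>)"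
    using le T0fin by (simp add: ennreal_add_left_cancel_le)
  note comp_meas[measurable]
  define gX where "gX l z = r l * (indicator (F l) z * (2 - 2 * fst z $ I l))" for l z
  define gY where "gY l z = r l * (indicator (F l) z * (2 - 2 * fst z $ J l))" for l z
  have inF: "fst z \<in> std_simplex" "snd z = vertex (I l)" if "z \<in> F l" for z l
    using that by (auto simp: F_def E_def)
  have eX: "W (Suc l) z * c z = ennreal (gX l z)" if l: "l < m" for l z
  proof (cases "z \<in> F l")
    case True
    have "c z = ennreal (2 - 2 * fst z $ I l)"
      using cost_vertex[OF inF(1)[OF True], of "I l"] inF(2)[OF True] by (simp add: c_def)
    then show ?thesis using True r_pos[OF l] by (simp add: W_def gX_def ennreal_mult')
  next
    case False then show ?thesis by (simp add: W_def gX_def)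
  qed
  have eY: "W (Suc l) z * c (P (Suc l) z) = ennreal (gY l z)" if l: "l < m" for l z
  proof (cases "z \<in> F l")
    case True
    have "c (P (Suc l) z) = ennreal (2 - 2 * fst z $ J l)"
      using cost_vertex[OF inF(1)[OF True], of "J l"] by (simp add: c_def P_def)
    then show ?thesis using True r_pos[OF l] by (simp add: W_def gY_def ennreal_mult')
  next
    case False then show ?thesis by (simp add: W_def gY_def)
  qed
  have gX_bd: "0 \<le> gX l z \<and> gX l z \<le> 2" and gY_bd: "0 \<le> gY l z \<and> gY l z \<le> 2" if l: "l < m" for l z
  proof -
    have *: "0 \<le> r l * (indicator (F l) z * (2 - 2 * fst z $ k)) \<and> r l * (indicator (F l) z * (2 - 2 * fst z $ k)) \<le> 2" for k
    proof (cases "z \<in> F l")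
      case True
      have b: "0 \<le> 2 - 2 * fst z $ k" "2 - 2 * fst z $ k \<le> 2"
        using simplex_bounds[OF inF(1)[OF True], of k] by auto
      have "r l * (2 - 2 * fst z $ k) \<le> 1 * 2"
        using r_pos[OF l] r_le[OF l] b by (intro mult_mono) auto
      then show ?thesis using True r_pos[OF l] b by simp
    next
      case False then show ?thesis by simp
    qed
    show "0 \<le> gX l z \<and> gX l z \<le> 2" using * unfolding gX_def by blast
    show "0 \<le> gY l z \<and> gY l z \<le> 2" using * unfolding gY_def by blast
  qed
  have gXm[measurable]: "gX l \<in> borel_measurable \<gamma>" for l unfolding gX_def by measurable
  have gYm[measurable]: "gY l \<in> borel_measurable \<gamma>" for l unfolding gY_def by measurable
  have iX: "integrable \<gamma> (gX l)" and iY: "integrable \<gamma> (gY l)" if l: "l < m" for l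
    using gX_bd[OF l] gY_bd[OF l]
    by (auto intro!: finite_measure.integrable_const_bound[OF fin_g, where B=2])
  have nX: "(\<integral>\<^sup>+ z. W (Suc l) z * c z \<partial>\<gamma>) = ennreal (integral\<^sup>L \<gamma> (gX l))" if l: "l < m" for l
    using eX[OF l] gX_bd[OF l] by (simp add: nn_integral_eq_integral[OF iX[OF l]])
  have nY: "(\<integral>\<^sup>+ z. W (Suc l) z * c (P (Suc l) z) \<partial>\<gamma>) = ennreal (integral\<^sup>L \<gamma> (gY l))" if l: "l < m" for l
    using eY[OF l] gY_bd[OF l] by (simp add: nn_integral_eq_integral[OF iY[OF l]])
  have intX_nn: "0 \<le> integral\<^sup>L \<gamma> (gX l)" and intY_nn: "0 \<le> integral\<^sup>L \<gamma> (gY l)" if "l < m" for l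
    using gX_bd[OF that] gY_bd[OF that] by (auto intro: integral_nonneg_AE)
  have s1: "(\<Sum>l<m. \<integral>\<^sup>+ z. W (Suc l) z * c z \<partial>\<gamma>) = ennreal (\<Sum>l<m. integral\<^sup>L \<gamma> (gX l))"
  proof -
    have "(\<Sum>l<m. \<integral>\<^sup>+ z. W (Suc l) z * c z \<partial>\<gamma>) = (\<Sum>l<m. ennreal (integral\<^sup>L \<gamma> (gX l)))"
      by (intro sum.cong refl) (simp add: nX)
    also have "\<dots> = ennreal (\<Sum>l<m. integral\<^sup>L \<gamma> (gX l))" by (rule sum_ennreal) (use intX_nn in auto)
    finally show ?thesis .
  qed
  have s2: "(\<Sum>l<m. \<integral>\<^sup>+ z. W (Suc l) z * c (P (Suc l) z) \<partial>\<gamma>) = ennreal (\<Sum>l<m. integral\<^sup>L \<gamma> (gY l))"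
  proof -
    have "(\<Sum>l<m. \<integral>\<^sup>+ z. W (Suc l) z * c (P (Suc l) z) \<partial>\<gamma>) = (\<Sum>l<m. ennreal (integral\<^sup>L \<gamma> (gY l)))"
      by (intro sum.cong refl) (simp add: nY)
    also have "\<dots> = ennreal (\<Sum>l<m. integral\<^sup>L \<gamma> (gY l))" by (rule sum_ennreal) (use intY_nn in auto)
    finally show ?thesis .
  qed
  have "ennreal (\<Sum>l<m. integral\<^sup>L \<gamma> (gX l)) \<le> ennreal (\<Sum>l<m. integral\<^sup>L \<gamma> (gY l))"
    using XY unfolding s1 s2 .
  then have sXY: "(\<Sum>l<m. integral\<^sup>L \<gamma> (gX l)) \<le> (\<Sum>l<m. integral\<^sup>L \<gamma> (gY l))"
  proof -
    have "0 \<le> (\<Sum>l<m. integral\<^sup>L \<gamma> (gY l))" by (rule sum_nonneg) (use intY_nn in auto)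
    then show ?thesis using \<open>ennreal _ \<le> ennreal _\<close> ennreal_le_iff by blast
  qed
  have key: "integral\<^sup>L \<gamma> (gY l) + 2 * \<delta> * t l \<le> integral\<^sup>L \<gamma> (gX l)" if l: "l < m" for l
  proof -
    have iI: "integrable \<gamma> (\<lambda>z. (r l * 2 * t l) * indicator (F l) z)"
    proof -
      have "emeasure \<gamma> (F l) < \<top>" using finite_measure.emeasure_finite[OF fin_g, of "F l"] by (simp add: less_top)
      then show ?thesis using Fs[of l] by (intro integrable_mult_right integrable_real_indicator) auto
    qed
    have "integral\<^sup>L \<gamma> (gY l) + 2 * \<delta> * t l = integral\<^sup>L \<gamma> (\<lambda>z. gY l z + (r l * 2 * t l) * indicator (F l) z)"
    proof -
      have "integral\<^sup>L \<gamma> (\<lambda>z. (r l * 2 * t l) * indicator (F l) z) = r l * 2 * t l * \<mu> l"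
        using space_g by (simp add: \<mu>_def)
      also have "\<dots> = 2 * \<delta> * t l" using r_mu[OF l] by (simp add: algebra_simps)
      finally show ?thesis using iY[OF l] iI r_mu[OF l] by (auto simp: \<mu>_def)
    qed
    also have "\<dots> \<le> integral\<^sup>L \<gamma> (gX l)"
    proof (intro integral_mono iX[OF l] Bochner_Integration.integrable_add iY[OF l] iI)
      fix z
      show "gY l z + r l * 2 * t l * indicator (F l) z \<le> gX l z"
      proof (cases "z \<in> F l")
        case True
        then have "t l < fst z $ J l - fst z $ I l" by (auto simp: F_def E_def)
        then have "0 \<le> r l * (fst z $ J l - fst z $ I l - t l)" using r_pos[OF l] by simp
        then have "r l * fst z $ I l + r l * t l \<le> r l * fst z $ J l" by (simp add: algebra_simps)
        then show ?thesis using True by (simp add: gX_def gY_def algebra_simps)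
      next
        case False then show ?thesis by (simp add: gX_def gY_def)
      qed
    qed
    finally show ?thesis .
  qed
  have "(\<Sum>l<m. integral\<^sup>L \<gamma> (gY l) + 2 * \<delta> * t l) \<le> (\<Sum>l<m. integral\<^sup>L \<gamma> (gX l))"
    using key by (intro sum_mono) auto
  moreover have "(\<Sum>l<m. t l) = s / 2"
  proof -
    have "(\<Sum>l<m. t l) = s - real m * \<epsilon>" by (simp add: t_def s_def sum_subtractf)
    also have "real m * \<epsilon> = s / 2" using m_pos by (simp add: \<epsilon>_def)
    finally show ?thesis by simp
  qed
  ultimately have "(\<Sum>l<m. integral\<^sup>L \<gamma> (gY l)) + \<delta> * s \<le> (\<Sum>l<m. integral\<^sup>L \<gamma> (gX l))"
    by (simp add: sum.distrib sum_distrib_left[symmetric])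
  with sXY have "\<delta> * s \<le> 0" by linarith
  moreover have "0 < \<delta> * s" using delta_pos s_pos by simp
  ultimately show False by linarith
qed

lemma main: "(\<Inter>i. A_set \<gamma> q i) \<noteq> {}"
proof -
  define c where "c a b = (if a = b then 0 else B_thr \<gamma> q a b - 1)" for a b
  define V where "V = {i. 0 < measure q {vertex i}}"
  have Vne: "V \<noteq> {}"
  proof
    assume "V = {}"
    then have z: "measure q {vertex i} = 0" for i using measure_nonneg[of q "{vertex i}"] 
      unfolding V_def by (metis (mono_tags) empty_Collect_eq order_less_le)
    have "{vertex i} \<in> null_sets q" for i
      using z[of i] finite_measure.emeasure_eq_measure[OF prob_space.finite_measure[OF qq(1)], of "{vertex i}"] vertex_borel qq(2)
      by (intro null_setsI) auto
    then have "(\<Union>i. {vertex i}) \<in> null_sets q" by (intro null_sets_UN') auto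
    moreover have "(\<Union>i. {vertex i}) = range vertex" by auto
    ultimately have "range vertex \<in> null_sets q" by metis
    then show False using qq(3) by (simp add: null_sets_def)
  qed
  have cyc: "cyc_ok c V" unfolding cyc_ok_def
  proof (intro allI impI, elim conjE)
    fix vs assume d: "distinct vs" and sV: "set vs \<subseteq> V" and ne: "vs \<noteq> []"
    show "wsum c (vs @ [hd vs]) \<le> 0"
    proof (cases "length vs = 1")
      case True
      then obtain a where "vs = [a]" by (metis One_nat_def length_0_conv length_Suc_conv)
      then show ?thesis by (simp add: c_def)
    next
      case False
      then have m2: "2 \<le> length vs" using ne by (cases vs) (auto simp: Suc_le_eq)
      have "wsum c (vs @ [hd vs]) = (\<Sum>l<length vs. c (vs!l) (vs!(Suc l mod length vs)))"
        by (rule wsum_cycle[OF ne])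
      also have "\<dots> = (\<Sum>l<length vs. B_thr \<gamma> q (vs!l) (vs!(Suc l mod length vs)) - 1)"
      proof (intro sum.cong refl)
        fix l assume l: "l \<in> {..<length vs}"
        have "l \<noteq> Suc l mod length vs"
        proof (cases "Suc l < length vs")
          case True then show ?thesis by simp
        next
          case False then have "Suc l = length vs" using l by auto
          then show ?thesis using m2 by simp
        qed
        then have "vs!l \<noteq> vs!(Suc l mod length vs)"
          using d l ne by (simp add: nth_eq_iff_index_eq)
        then show "c (vs!l) (vs!(Suc l mod length vs)) = B_thr \<gamma> q (vs!l) (vs!(Suc l mod length vs)) - 1"
          by (simp add: c_def)
      qed
      also have "\<dots> \<le> 0" by (rule cycle_nonpos[OF d _ m2]) (use sV in \<open>auto simp: V_def\<close>)
      finally show ?thesis .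
    qed
  qed
  have tri: "c a j + c j b \<le> c a b" if "j \<notin> V" for j a b
  proof -
    have "measure q {vertex j} = 0" using that measure_nonneg[of q "{vertex j}"] by (auto simp: V_def)
    then have Bj: "B_thr \<gamma> q j b = 0" by (rule B_zero_mass)
    show ?thesis
    proof (cases "a = j \<or> b = j")
      case True then show ?thesis by (auto simp: c_def)
    next
      case False
      then show ?thesis using Bj Bp(2)[of a j] B_tri[of a j b] by (auto simp: c_def)
    qed
  qed
  obtain u where u: "\<And>i j. c i j \<le> u i - u j"
    using potentials_global[OF cyc Vne tri] by (auto simp: c_def)
  define t where "t = (1 + (\<Sum>k\<in>UNIV. u k)) / real CARD('n)"
  define x :: "real^'n" where "x = (\<chi> k. t - u k)"
  have "x \<in> hyperplane_D"
    by (simp add: hyperplane_D_def x_def sum_subtractf t_def)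
  moreover have "B_thr \<gamma> q i j - 1 \<le> x$j - x$i" if "j \<noteq> i" for i j
    using u[of i j] that by (simp add: x_def c_def)
  ultimately have "x \<in> (\<Inter>i. A_set \<gamma> q i)" by (auto simp: A_set_def)
  then show ?thesis by auto
qed

end

theorem propositionD1:
  fixes p q :: "(real^'n::finite) measure"
    and \<gamma> :: "((real^'n) \<times> (real^'n)) measure"
  assumes "CARD('n) \<ge> 2"
    and "prob_space p" and "sets p = sets borel" and "emeasure p std_simplex = 1"
    and "prob_space q" and "sets q = sets borel" and "emeasure q (range vertex) = 1"
    and "optimal_coupling p q \<gamma>"
  shows "(\<Inter>i\<in>UNIV. A_set \<gamma> q i) \<noteq> {}"
proof -
  interpret OT p q \<gamma> by (rule OT.intro; fact)
  show ?thesis by (rule main)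
qed

end
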